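(* Let $G=(V,E)$ be a wireless sensor network whose nodes are points in the Euclidean plane, with a sink $v_s\in V$, operating under an interference model $\mathcal M$. Let $\mathcal Q$ be a finite set of periodic data collection queries, where the $i$-th query has source set $\mathcal S_i\subseteq V$, per-link transmission time $\chi_i>0$ per data unit, period $\mathbf p_i>0$, initial release time $\mathbf a_i$ and relative deadline $\mathbf d_i$. If $\mathcal Q$ is schedulable, then $$\ell_{G,\mathcal Q}(g_{v,h})\le c_1(\mathcal M)\quad\text{for every interference-aware region } g_{v,h}\ (v,h\in\mathbb Z),$$ and $$\sum_{i}\frac{|\mathcal S_i|\cdot\chi_i}{\mathbf p_i}\le 1 .$$
   Context: Network model: two nodes can communicate if they are within transmission range of each other; $E$ is the set of communication links. An interference model $\mathcal M$ specifies which sets of links can transmit simultaneously (interference-free). Examples: the protocol interference model, the RTS/CTS model and the physical (SINR) interference model. The interference-aware radius $\lambda(\mathcal M)$ is the maximum possible distance between two senders such that the corresponding two links interfere under $\mathcal M$; hence nodes pairwise more than $\lambda(\mathcal M)$ apart can transmit concurrently. Partition the plane by the vertical lines $x=i\lambda(\mathcal M)$ and horizontal lines $y=j\lambda(\mathcal M)$, $i,j\in\mathbb Z$; the square between $x=v\lambda(\mathcal M)$, $x=(v+1)\lambda(\mathcal M)$, $y=h\lambda(\mathcal M)$, $y=(h+1)\lambda(\mathcal M)$ is the interference-aware region $g_{v,h}$. The constant $c_1(\mathcal M)\ge 1$ is the maximum number of nodes that can transmit concurrently in any interference-aware region under $\mathcal M$. Queries: each source $v\in\mathcal S_i$ generates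 one data unit for the $i$-th query per period; the $t$-th instance of query $i$ is released at $\mathbf a_i+(t-1)\mathbf p_i$ and its data (the raw data unit from every node of $\mathcal S_i$, collected without aggregation) must be received by the sink by $\mathbf a_i+(t-1)\mathbf p_i+\mathbf d_i$. Transmitting one data unit of query $i$ over any link takes time $\chi_i$. The set $\mathcal Q$ is schedulable if there exist routing and an interference-free schedule of node transmissions (when each node transmits and which packets) under $\mathcal M$ such that every instance of every query meets its deadline. Initial load: for $u\in V$, $\ell_{G,\mathcal Q}(u)=\sum_{j:\,u\in\mathcal S_j}\chi_j/\mathbf p_j$; for a region $g$, $\ell_{G,\mathcal Q}(g)=\sum_{u\in V(g)}\ell_{G,\mathcal Q}(u)$, where $V(g)$ is the set of nodes of $V$ lying in $g$. *)

theory Defs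
  imports "HOL-Analysis.Analysis"
begin

text \<open>Nodes are points of the Euclidean plane; a link is an ordered pair (sender, receiver).\<close>
type_synonym point = "real \<times> real"
type_synonym link = "point \<times> point"

definition links :: "point set \<Rightarrow> real \<Rightarrow> link set" where
  "links V R = {(u, w). u \<in> V \<and> w \<in> V \<and> u \<noteq> w \<and> dist u w \<le> R}"

text \<open>An interference model M is the family of link sets that can transmit
  simultaneously (interference-free).  Two links e1, e2 interfere iff {e1,e2} is not in M.\<close>
definition interference_radius :: "link set \<Rightarrow> link set set \<Rightarrow> real" where
  "interference_radius E M =
     Max (insert 0 {dist (fst e1) (fst e2) | e1 e2. e1 \<in> E \<and> e2 \<in> E \<and> {e1, e2} \<notin> M})"

definition region :: "real \<Rightarrow> int \<Rightarrow> int \<Rightarrow> point set" where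
  "region lam v h = {(x, y). real_of_int v * lam \<le> x \<and> x < real_of_int (v + 1) * lam \<and>
                              real_of_int h * lam \<le> y \<and> y < real_of_int (h + 1) * lam}"

definition c1 :: "link set \<Rightarrow> link set set \<Rightarrow> nat" where
  "c1 E M = Sup {card {fst e | e. e \<in> A \<and> fst e \<in> region (interference_radius E M) v h}
                 | A v h. A \<in> M \<and> A \<subseteq> E}"

text \<open>Queries are indexed by i < n with source sets S i, transmission time chi i,
  period p i, release offset a i and relative deadline d i.\<close>
definition node_load :: "nat \<Rightarrow> (nat \<Rightarrow> point set) \<Rightarrow> (nat \<Rightarrow> real) \<Rightarrow> (nat \<Rightarrow> real)
    \<Rightarrow> point \<Rightarrow> real" where
  "node_load n S chi p u = (\<Sum>j \<in> {j. j < n \<and> u \<in> S j}. chi j / p j)"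

definition region_load :: "point set \<Rightarrow> nat \<Rightarrow> (nat \<Rightarrow> point set) \<Rightarrow> (nat \<Rightarrow> real)
    \<Rightarrow> (nat \<Rightarrow> real) \<Rightarrow> point set \<Rightarrow> real" where
  "region_load V n S chi p g = (\<Sum>u \<in> V \<inter> g. node_load n S chi p u)"

fun walk_from :: "point \<Rightarrow> link list \<Rightarrow> point \<Rightarrow> bool" where
  "walk_from u [] w = (u = w)"
| "walk_from u (e # es) w = (fst e = u \<and> walk_from (snd e) es w)"

text \<open>A schedule sigma assigns to every data unit (query i, source u, instance t, where
  instance t = 0,1,2,... is released at a i + t * p i) its route together with the start
  time of each hop: a list of (link, start time).\<close>
type_synonym schedule = "nat \<Rightarrow> point \<Rightarrow> nat \<Rightarrow> (link \<times> real) list"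

definition active :: "nat \<Rightarrow> (nat \<Rightarrow> point set) \<Rightarrow> (nat \<Rightarrow> real) \<Rightarrow> schedule \<Rightarrow> real
    \<Rightarrow> (nat \<times> point \<times> nat \<times> nat) set" where
  "active n S chi \<sigma> \<tau> = {(i, u, t, j). i < n \<and> u \<in> S i \<and> j < length (\<sigma> i u t) \<and>
       snd (\<sigma> i u t ! j) \<le> \<tau> \<and> \<tau> < snd (\<sigma> i u t ! j) + chi i}"

definition active_link :: "schedule \<Rightarrow> nat \<times> point \<times> nat \<times> nat \<Rightarrow> link" where
  "active_link \<sigma> x = (case x of (i, u, t, j) \<Rightarrow> fst (\<sigma> i u t ! j))"

definition valid_schedule ::
  "point set \<Rightarrow> real \<Rightarrow> point \<Rightarrow> link set set \<Rightarrow> nat \<Rightarrow> (nat \<Rightarrow> point set)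
   \<Rightarrow> (nat \<Rightarrow> real) \<Rightarrow> (nat \<Rightarrow> real) \<Rightarrow> (nat \<Rightarrow> real) \<Rightarrow> (nat \<Rightarrow> real) \<Rightarrow> schedule \<Rightarrow> bool" where
  "valid_schedule V R vs M n S chi p a d \<sigma> \<longleftrightarrow>
     \<comment> \<open>routing and deadlines\<close>
     (\<forall>i < n. \<forall>u \<in> S i. \<forall>t. let hs = \<sigma> i u t; rel = a i + real t * p i in
        set (map fst hs) \<subseteq> links V R \<and>
        walk_from u (map fst hs) vs \<and>
        (\<forall>j < length hs. rel \<le> snd (hs ! j) \<and> snd (hs ! j) + chi i \<le> rel + d i) \<and>
        (\<forall>j. Suc j < length hs \<longrightarrow> snd (hs ! j) + chi i \<le> snd (hs ! Suc j))) \<and>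
     \<comment> \<open>interference-freedom at every time instant\<close>
     (\<forall>\<tau>. active_link \<sigma> ` active n S chi \<sigma> \<tau> \<in> M \<and>
        (\<forall>x \<in> active n S chi \<sigma> \<tau>. \<forall>y \<in> active n S chi \<sigma> \<tau>. x \<noteq> y \<longrightarrow>
           {fst (active_link \<sigma> x), snd (active_link \<sigma> x)} \<inter>
           {fst (active_link \<sigma> y), snd (active_link \<sigma> y)} = {}))"

definition schedulable ::
  "point set \<Rightarrow> real \<Rightarrow> point \<Rightarrow> link set set \<Rightarrow> nat \<Rightarrow> (nat \<Rightarrow> point set)
   \<Rightarrow> (nat \<Rightarrow> real) \<Rightarrow> (nat \<Rightarrow> real) \<Rightarrow> (nat \<Rightarrow> real) \<Rightarrow> (nat \<Rightarrow> real) \<Rightarrow> bool" where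
  "schedulable V R vs M n S chi p a d \<longleftrightarrow> (\<exists>\<sigma>. valid_schedule V R vs M n S chi p a d \<sigma>)"

end

theory Submission
  imports Defs
begin
lemma ind_int:
  fixes a b L U :: real
  assumes "L \<le> a" "a \<le> b" "b \<le> U"
  shows "((\<lambda>x. if a \<le> x \<and> x < b then 1 else 0) has_integral (b - a)) {L..U}"
proof -
  have "((\<lambda>x. 1::real) has_integral (b - a)) {a..b}"
    using has_integral_const_real[of "1::real" a b] assms by (simp add: content_real)
  then have "((\<lambda>x. if x \<in> {a..b} then 1::real else 0) has_integral (b - a)) {L..U}"
    using assms by (subst has_integral_restrict) auto
  moreover have "((\<lambda>x. if x \<in> {a..b} then 1::real else 0) has_integral (b - a)) {L..U} \<longleftrightarrow>
     ((\<lambda>x. if a \<le> x \<and> x < b then 1::real else 0) has_integral (b - a)) {L..U}"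
    by (rule has_integral_spike_finite_eq[where S="{b}"]) auto
  ultimately show ?thesis by simp
qed

lemma packing:
  fixes s l :: "'k \<Rightarrow> real" and L U :: real and K :: nat
  assumes fin: "finite I" and LU: "L \<le> U"
    and iv: "\<And>k. k \<in> I \<Longrightarrow> L \<le> s k \<and> 0 \<le> l k \<and> s k + l k \<le> U"
    and cnt: "\<And>\<tau>. card {k\<in>I. s k \<le> \<tau> \<and> \<tau> < s k + l k} \<le> K"
  shows "(\<Sum>k\<in>I. l k) \<le> real K * (U - L)"
proof -
  have h: "((\<lambda>x. \<Sum>k\<in>I. if s k \<le> x \<and> x < s k + l k then 1 else 0) has_integral (\<Sum>k\<in>I. l k)) {L..U}"
  proof (rule has_integral_sum[OF fin])
    fix k assume "k \<in> I"
    then show "((\<lambda>x. if s k \<le> x \<and> x < s k + l k then 1 else 0) has_integral l k) {L..U}"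
      using ind_int[of L "s k" "s k + l k" U] iv[of k] by simp
  qed
  have c: "((\<lambda>x. real K) has_integral (real K * (U - L))) {L..U}"
    using has_integral_const_real[of "real K" L U] LU by (simp add: content_real mult.commute)
  show ?thesis
  proof (rule has_integral_le[OF h c])
    fix x
    have "(\<Sum>k\<in>I. if s k \<le> x \<and> x < s k + l k then 1 else 0) = real (card {k\<in>I. s k \<le> x \<and> x < s k + l k})"
      using fin by (simp add: sum.If_cases Int_def)
    also have "\<dots> \<le> real K" using cnt by simp
    finally show "(\<Sum>k\<in>I. if s k \<le> x \<and> x < s k + l k then 1 else 0) \<le> real K" .
  qed
qed
lemma averaging:
  fixes S :: "nat \<Rightarrow> 'p set" and chi p a d :: "nat \<Rightarrow> real" and st :: "nat \<Rightarrow> 'p \<Rightarrow> nat \<Rightarrow> real"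
    and K :: nat
  assumes fin: "\<And>i. i < n \<Longrightarrow> finite (S i)"
    and chi: "\<And>i. i < n \<Longrightarrow> chi i > 0"
    and pp: "\<And>i. i < n \<Longrightarrow> p i > 0"
    and win: "\<And>i u t. i < n \<Longrightarrow> u \<in> S i \<inter> G \<Longrightarrow>
                a i + real t * p i \<le> st i u t \<and> st i u t + chi i \<le> a i + real t * p i + d i"
    and cnt: "\<And>\<tau> J. finite J \<Longrightarrow> J \<subseteq> {(i,u,t). i < n \<and> u \<in> S i \<inter> G \<and> st i u t \<le> \<tau> \<and> \<tau> < st i u t + chi i}
                 \<Longrightarrow> card J \<le> K"
  shows "(\<Sum>i<n. real (card (S i \<inter> G)) * chi i / p i) \<le> real K"
proof (rule ccontr)
  define m where "m i = real (card (S i \<inter> G))" for i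
  define Sg where "Sg = (\<Sum>i<n. m i * chi i / p i)"
  define c where "c = (\<Sum>i<n. \<bar>a i + d i\<bar>)"
  define A where "A = (\<Sum>i<n. \<bar>a i\<bar>)"
  define D where "D = (\<Sum>i<n. m i * chi i)"
  assume "\<not> ?thesis"
  then have gt: "Sg > real K" by (simp add: Sg_def m_def)
  have c0: "c \<ge> 0" unfolding c_def by (simp add: sum_nonneg)
  have A0: "A \<ge> 0" unfolding A_def by (simp add: sum_nonneg)
  define T where "T = max c ((c * Sg + D + real K * A + 1) / (Sg - real K))"
  have Tc: "T \<ge> c" unfolding T_def by simp
  have "(c * Sg + D + real K * A + 1) / (Sg - real K) \<le> T" unfolding T_def by simp
  then have Tbig: "c * Sg + D + real K * A + 1 \<le> T * (Sg - real K)"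
    using gt by (simp add: pos_divide_le_eq)
  define N where "N i = nat \<lfloor>(T - c) / p i\<rfloor>" for i
  define I where "I = Sigma {..<n} (\<lambda>i. Sigma (S i \<inter> G) (\<lambda>_. {..<N i}))"
  have finI: "finite I" unfolding I_def using fin by (auto intro!: finite_SigmaI)
  have aic: "a i + d i \<le> c" if "i < n" for i
  proof -
    have "\<bar>a i + d i\<bar> \<le> c" unfolding c_def
      by (rule member_le_sum[where f="\<lambda>i. \<bar>a i + d i\<bar>"]) (use that in auto)
    then show ?thesis by simp
  qed
  have aiA: "- A \<le> a i" if "i < n" for i
  proof -
    have "\<bar>a i\<bar> \<le> A" unfolding A_def
      by (rule member_le_sum[where f="\<lambda>i. \<bar>a i\<bar>"]) (use that in auto)
    then show ?thesis by simp
  qed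
  have tN: "real t * p i \<le> T - c" if "i < n" "t < N i" for i t
  proof -
    have "real t < real (N i)" using that by simp
    also have "real (N i) \<le> (T - c) / p i"
      unfolding N_def using Tc pp[OF that(1)] by (simp add: divide_nonneg_pos)
    finally have "real t \<le> (T - c) / p i" by simp
    then show ?thesis using pp[OF that(1)] by (simp add: pos_le_divide_eq)
  qed
  have pack: "(\<Sum>k\<in>I. (\<lambda>(i,u,t). chi i) k) \<le> real K * (T - (- A))"
  proof (rule packing[OF finI, where s="\<lambda>(i,u,t). st i u t"])
    show "- A \<le> T" using A0 c0 Tc by simp
  next
    fix k assume "k \<in> I"
    then obtain i u t where k: "k = (i,u,t)" "i < n" "u \<in> S i \<inter> G" "t < N i"
      unfolding I_def by auto
    have w: "a i + real t * p i \<le> st i u t \<and> st i u t + chi i \<le> a i + real t * p i + d i"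
      using win k by auto
    have "0 \<le> real t * p i" using pp[OF k(2)] by simp
    then show "- A \<le> (\<lambda>(i,u,t). st i u t) k \<and> 0 \<le> (\<lambda>(i,u,t). chi i) k \<and>
          (\<lambda>(i,u,t). st i u t) k + (\<lambda>(i,u,t). chi i) k \<le> T"
      using w k aic[OF k(2)] aiA[OF k(2)] chi[OF k(2)] tN[OF k(2) k(4)] by auto
  next
    fix \<tau>
    let ?J = "{k\<in>I. (\<lambda>(i,u,t). st i u t) k \<le> \<tau> \<and> \<tau> < (\<lambda>(i,u,t). st i u t) k + (\<lambda>(i,u,t). chi i) k}"
    show "card ?J \<le> K"
      by (rule cnt[of ?J \<tau>]) (use finI in \<open>auto simp: I_def\<close>)
  qed
  have sumI: "(\<Sum>k\<in>I. (\<lambda>(i,u,t). chi i) k) = (\<Sum>i<n. m i * real (N i) * chi i)"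
    unfolding I_def using fin
    by (simp add: sum.Sigma[symmetric] m_def)
  have Nlow: "(T - c) / p i - 1 \<le> real (N i)" if "i < n" for i
    unfolding N_def using Tc pp[OF that] by (simp add: divide_nonneg_pos)
  have "(\<Sum>i<n. m i * chi i * ((T - c) / p i - 1)) \<le> (\<Sum>i<n. m i * real (N i) * chi i)"
  proof (rule sum_mono)
    fix i assume "i \<in> {..<n}"
    then have i: "i < n" by simp
    have "m i * chi i \<ge> 0" using chi[OF i] by (simp add: m_def)
    then have "m i * chi i * ((T - c) / p i - 1) \<le> m i * chi i * real (N i)"
      using Nlow[OF i] by (rule mult_left_mono[rotated])
    then show "m i * chi i * ((T - c) / p i - 1) \<le> m i * real (N i) * chi i"
      by (simp add: mult_ac)
  qed
  moreover have "(\<Sum>i<n. m i * chi i * ((T - c) / p i - 1)) = (T - c) * Sg - D"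
    unfolding Sg_def D_def
    by (simp add: sum_distrib_left sum_subtractf[symmetric] algebra_simps)
  ultimately have "(T - c) * Sg - D \<le> real K * (T + A)"
    using pack sumI by simp
  then have "T * (Sg - real K) \<le> c * Sg + D + real K * A" by (simp add: algebra_simps)
  then show False using Tbig by simp
qed
lemma walk_ends:
  "walk_from u es w \<Longrightarrow> es \<noteq> [] \<Longrightarrow> fst (es ! 0) = u \<and> snd (es ! (length es - 1)) = w"
proof (induction es arbitrary: u)
  case Nil then show ?case by simp
next
  case (Cons e es)
  then show ?case by (cases es) (auto simp: nth_Cons')
qed

theorem theorem1:
  fixes V :: "point set" and R :: real and vs :: point and M :: "link set set"
    and n :: nat and S :: "nat \<Rightarrow> point set" and chi p a d :: "nat \<Rightarrow> real"
  assumes "finite V" and "vs \<in> V" and "R > 0"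
    and "\<And>i. i < n \<Longrightarrow> S i \<subseteq> V"
    and "\<And>i. i < n \<Longrightarrow> vs \<notin> S i"
    and "\<And>i. i < n \<Longrightarrow> chi i > 0"
    and "\<And>i. i < n \<Longrightarrow> p i > 0"
    and "schedulable V R vs M n S chi p a d"
  shows "(\<forall>v h. region_load V n S chi p (region (interference_radius (links V R) M) v h)
                  \<le> real (c1 (links V R) M))
         \<and> (\<Sum>i<n. real (card (S i)) * chi i / p i) \<le> 1"
proof -
  note finV = assms(1) and SV = assms(4) and vsS = assms(5) and chi = assms(6) and pp = assms(7)
  obtain \<sigma> where val: "valid_schedule V R vs M n S chi p a d \<sigma>"
    using assms(8) unfolding schedulable_def by blast
  have rt: "\<And>i u t. i < n \<Longrightarrow> u \<in> S i \<Longrightarrow>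
        set (map fst (\<sigma> i u t)) \<subseteq> links V R \<and> walk_from u (map fst (\<sigma> i u t)) vs \<and>
        (\<forall>j < length (\<sigma> i u t). a i + real t * p i \<le> snd (\<sigma> i u t ! j) \<and>
             snd (\<sigma> i u t ! j) + chi i \<le> a i + real t * p i + d i)"
    using val unfolding valid_schedule_def Let_def by blast
  have intf: "\<And>\<tau>. active_link \<sigma> ` active n S chi \<sigma> \<tau> \<in> M \<and>
        (\<forall>x \<in> active n S chi \<sigma> \<tau>. \<forall>y \<in> active n S chi \<sigma> \<tau>. x \<noteq> y \<longrightarrow>
           {fst (active_link \<sigma> x), snd (active_link \<sigma> x)} \<inter>
           {fst (active_link \<sigma> y), snd (active_link \<sigma> y)} = {})"
    using val unfolding valid_schedule_def by blast
  have ne: "\<sigma> i u t \<noteq> []" if "i < n" "u \<in> S i" for i u t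
    using rt[OF that, of t] vsS[OF that(1)] that(2) by auto
  have ends: "fst (fst (\<sigma> i u t ! 0)) = u \<and> snd (fst (\<sigma> i u t ! (length (\<sigma> i u t) - 1))) = vs"
    if "i < n" "u \<in> S i" for i u t
    using walk_ends[of u "map fst (\<sigma> i u t)" vs] rt[OF that, of t] ne[OF that, of t] by simp
  have finS: "\<And>i. i < n \<Longrightarrow> finite (S i)" using SV finV finite_subset by blast
  have Asub: "active_link \<sigma> ` active n S chi \<sigma> \<tau> \<subseteq> links V R" for \<tau>
  proof
    fix e assume "e \<in> active_link \<sigma> ` active n S chi \<sigma> \<tau>"
    then obtain i u t j where x: "i < n" "u \<in> S i" "j < length (\<sigma> i u t)" "e = fst (\<sigma> i u t ! j)"
      unfolding active_def active_link_def by auto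
    then have "e \<in> set (map fst (\<sigma> i u t))" by auto
    then show "e \<in> links V R" using rt[OF x(1,2), of t] by auto
  qed
  have claim2: "(\<Sum>i<n. real (card (S i \<inter> UNIV)) * chi i / p i) \<le> real (1::nat)"
  proof (rule averaging[where st="\<lambda>i u t. snd (\<sigma> i u t ! (length (\<sigma> i u t) - 1))" and a=a and d=d])
    show "\<And>i. i < n \<Longrightarrow> finite (S i)" by (rule finS)
    show "\<And>i. i < n \<Longrightarrow> chi i > 0" by (rule chi)
    show "\<And>i. i < n \<Longrightarrow> p i > 0" by (rule pp)
  next
    fix i u t assume "i < n" "u \<in> S i \<inter> UNIV"
    then show "a i + real t * p i \<le> snd (\<sigma> i u t ! (length (\<sigma> i u t) - 1)) \<and>
       snd (\<sigma> i u t ! (length (\<sigma> i u t) - 1)) + chi i \<le> a i + real t * p i + d i"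
      using rt[of i u t] ne[of i u t] by auto
  next
    fix \<tau> J assume fJ: "finite J" and J: "J \<subseteq> {(i,u,t). i < n \<and> u \<in> S i \<inter> UNIV \<and>
      snd (\<sigma> i u t ! (length (\<sigma> i u t) - 1)) \<le> \<tau> \<and> \<tau> < snd (\<sigma> i u t ! (length (\<sigma> i u t) - 1)) + chi i}"
    have "\<forall>x\<in>J. \<forall>y\<in>J. x = y"
    proof (intro ballI)
      fix x y assume xy: "x \<in> J" "y \<in> J"
      obtain i u t where xx: "x = (i,u,t)" by (cases x) auto
      obtain i' u' t' where yy: "y = (i',u',t')" by (cases y) auto
      have hx: "i < n" "u \<in> S i" "snd (\<sigma> i u t ! (length (\<sigma> i u t) - 1)) \<le> \<tau>"
          "\<tau> < snd (\<sigma> i u t ! (length (\<sigma> i u t) - 1)) + chi i"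
        using J xy xx by auto
      have hy: "i' < n" "u' \<in> S i'" "snd (\<sigma> i' u' t' ! (length (\<sigma> i' u' t') - 1)) \<le> \<tau>"
          "\<tau> < snd (\<sigma> i' u' t' ! (length (\<sigma> i' u' t') - 1)) + chi i'"
        using J xy yy by auto
      let ?X = "(i,u,t,length (\<sigma> i u t) - 1)" and ?Y = "(i',u',t',length (\<sigma> i' u' t') - 1)"
      have X: "?X \<in> active n S chi \<sigma> \<tau>" using hx ne[OF hx(1,2), of t] unfolding active_def by auto
      have Y: "?Y \<in> active n S chi \<sigma> \<tau>" using hy ne[OF hy(1,2), of t'] unfolding active_def by auto
      have vin: "vs \<in> {fst (active_link \<sigma> ?X), snd (active_link \<sigma> ?X)} \<inter>
           {fst (active_link \<sigma> ?Y), snd (active_link \<sigma> ?Y)}"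
        using ends[OF hx(1,2), of t] ends[OF hy(1,2), of t'] unfolding active_link_def by auto
      note D = bspec[OF bspec[OF conjunct2[OF intf[of \<tau>]] X] Y]
      have "?X = ?Y"
      proof (rule ccontr)
        assume "?X \<noteq> ?Y"
        with D have "{fst (active_link \<sigma> ?X), snd (active_link \<sigma> ?X)} \<inter>
           {fst (active_link \<sigma> ?Y), snd (active_link \<sigma> ?Y)} = {}" by (rule mp)
        with vin show False by (metis empty_iff)
      qed
      then show "x = y" using xx yy by simp
    qed
    then show "card J \<le> 1" using fJ by (simp add: card_le_Suc0_iff_eq)
  qed
  have claim1: "region_load V n S chi p (region (interference_radius (links V R) M) v h)
                  \<le> real (c1 (links V R) M)" for v h
  proof -
    let ?lam = "interference_radius (links V R) M"
    let ?g = "region ?lam v h"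
    have "region_load V n S chi p ?g = (\<Sum>u\<in>V \<inter> ?g. \<Sum>i<n. if u \<in> S i then chi i / p i else 0)"
      unfolding region_load_def node_load_def
      by (rule sum.cong[OF refl]) (simp add: sum.If_cases Int_def conj_commute lessThan_def)
    also have "\<dots> = (\<Sum>i<n. \<Sum>u\<in>V \<inter> ?g. if u \<in> S i then chi i / p i else 0)"
      by (rule sum.swap)
    also have "\<dots> = (\<Sum>i<n. real (card (S i \<inter> ?g)) * chi i / p i)"
    proof (rule sum.cong[OF refl])
      fix i assume "i \<in> {..<n}"
      then have "S i \<subseteq> V" using SV by simp
      then have "V \<inter> ?g \<inter> {u. u \<in> S i} = S i \<inter> ?g" by auto
      then show "(\<Sum>u\<in>V \<inter> ?g. if u \<in> S i then chi i / p i else 0) = real (card (S i \<inter> ?g)) * chi i / p i"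
        using finV by (simp add: sum.If_cases)
    qed
    also have "\<dots> \<le> real (c1 (links V R) M)"
    proof (rule averaging[where st="\<lambda>i u t. snd (\<sigma> i u t ! 0)" and a=a and d=d])
      show "\<And>i. i < n \<Longrightarrow> finite (S i)" by (rule finS)
      show "\<And>i. i < n \<Longrightarrow> chi i > 0" by (rule chi)
      show "\<And>i. i < n \<Longrightarrow> p i > 0" by (rule pp)
    next
      fix i u t assume "i < n" "u \<in> S i \<inter> ?g"
      then show "a i + real t * p i \<le> snd (\<sigma> i u t ! 0) \<and>
         snd (\<sigma> i u t ! 0) + chi i \<le> a i + real t * p i + d i"
        using rt[of i u t] ne[of i u t] by auto
    next
      fix \<tau> J assume fJ: "finite J" and J: "J \<subseteq> {(i,u,t). i < n \<and> u \<in> S i \<inter> ?g \<and>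
        snd (\<sigma> i u t ! 0) \<le> \<tau> \<and> \<tau> < snd (\<sigma> i u t ! 0) + chi i}"
      let ?A = "active_link \<sigma> ` active n S chi \<sigma> \<tau>"
      let ?Snd = "{fst e | e. e \<in> ?A \<and> fst e \<in> ?g}"
      define f where "f = (\<lambda>(i::nat,u::point,t::nat). u)"
      have inj: "inj_on f J"
      proof (rule inj_onI)
        fix x y assume xy: "x \<in> J" "y \<in> J" "f x = f y"
        obtain i u t where xx: "x = (i,u,t)" by (cases x) auto
        obtain i' u' t' where yy: "y = (i',u',t')" by (cases y) auto
        have hx: "i < n" "u \<in> S i" "snd (\<sigma> i u t ! 0) \<le> \<tau>" "\<tau> < snd (\<sigma> i u t ! 0) + chi i"
          using J xy xx by auto
        have hy: "i' < n" "u' \<in> S i'" "snd (\<sigma> i' u' t' ! 0) \<le> \<tau>" "\<tau> < snd (\<sigma> i' u' t' ! 0) + chi i'"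
          using J xy yy by auto
        have uu: "u = u'" using xy(3) xx yy f_def by simp
        let ?X = "(i,u,t,0::nat)" and ?Y = "(i',u',t',0::nat)"
        have X: "?X \<in> active n S chi \<sigma> \<tau>" using hx ne[OF hx(1,2), of t] unfolding active_def by auto
        have Y: "?Y \<in> active n S chi \<sigma> \<tau>" using hy ne[OF hy(1,2), of t'] unfolding active_def by auto
        have vin: "u \<in> {fst (active_link \<sigma> ?X), snd (active_link \<sigma> ?X)} \<inter>
             {fst (active_link \<sigma> ?Y), snd (active_link \<sigma> ?Y)}"
          using ends[OF hx(1,2), of t] ends[OF hy(1,2), of t'] uu unfolding active_link_def by auto
        note D = bspec[OF bspec[OF conjunct2[OF intf[of \<tau>]] X] Y]
        have "?X = ?Y"
        proof (rule ccontr)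
          assume "?X \<noteq> ?Y"
          with D have "{fst (active_link \<sigma> ?X), snd (active_link \<sigma> ?X)} \<inter>
             {fst (active_link \<sigma> ?Y), snd (active_link \<sigma> ?Y)} = {}" by (rule mp)
          with vin show False by (metis empty_iff)
        qed
        then show "x = y" using xx yy by simp
      qed
      have img: "f ` J \<subseteq> ?Snd"
      proof
        fix w assume "w \<in> f ` J"
        then obtain i u t where x: "(i,u,t) \<in> J" "w = u" unfolding f_def by auto
        have hx: "i < n" "u \<in> S i" "u \<in> ?g" "snd (\<sigma> i u t ! 0) \<le> \<tau>" "\<tau> < snd (\<sigma> i u t ! 0) + chi i"
          using J x by auto
        let ?X = "(i,u,t,0::nat)"
        have X: "?X \<in> active n S chi \<sigma> \<tau>" using hx ne[OF hx(1,2), of t] unfolding active_def by auto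
        have "fst (active_link \<sigma> ?X) = u" using ends[OF hx(1,2), of t] unfolding active_link_def by simp
        then show "w \<in> ?Snd" using X x hx(3) by (metis (mono_tags, lifting) image_eqI mem_Collect_eq)
      qed
      have SndV: "?Snd \<subseteq> V" using Asub[of \<tau>] unfolding links_def by auto
      have finSnd: "finite ?Snd" using SndV finV finite_subset by blast
      have "card J = card (f ` J)" using inj by (simp add: card_image)
      also have "\<dots> \<le> card ?Snd" using img finSnd by (rule card_mono[rotated])
      also have "\<dots> \<le> c1 (links V R) M"
        unfolding c1_def
      proof (rule cSup_upper)
        show "card ?Snd \<in> {card {fst e | e. e \<in> A \<and> fst e \<in> region ?lam v h} | A v h. A \<in> M \<and> A \<subseteq> links V R}"
          using intf[of \<tau>] Asub[of \<tau>] by blast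
        show "bdd_above {card {fst e | e. e \<in> A \<and> fst e \<in> region ?lam v h} | A v h. A \<in> M \<and> A \<subseteq> links V R}"
        proof (rule bdd_aboveI[where M="card V"])
          fix x assume "x \<in> {card {fst e | e. e \<in> A \<and> fst e \<in> region ?lam v h} | A v h. A \<in> M \<and> A \<subseteq> links V R}"
          then obtain A v h where x: "x = card {fst e | e. e \<in> A \<and> fst e \<in> region ?lam v h}" "A \<subseteq> links V R"
            by blast
          have "{fst e | e. e \<in> A \<and> fst e \<in> region ?lam v h} \<subseteq> V" using x(2) unfolding links_def by auto
          then show "x \<le> card V" using x(1) finV by (simp add: card_mono)
        qed
      qed
      finally show "card J \<le> c1 (links V R) M" .
    qed
    finally show ?thesis .
  qed
  show ?thesis using claim1 claim2 by simp
qed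
end
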